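(* Let $\alpha,\beta,\gamma$ be partitions with $\alpha_1\le 2$ such that $\beta'_i\le\gamma'_i+1$ for all $i$ (equivalently, every row of an LR-tableau of type $(\alpha,\beta,\gamma)$ contains at most one box). Let $\Delta,\Delta'\in\mathcal D_{\alpha,\gamma}^\beta$. Then $\Delta'\to\Delta$ (i.e. $\Delta'\le_{\rm arc}\Delta$, $\Delta'\ne\Delta$, and there is no $\Delta''$ with $\Delta'<_{\rm arc}\Delta''<_{\rm arc}\Delta$) if and only if $\Delta'$ is obtained from $\Delta$ by a single move of type (A), (B), (C) or (D) and $x(\Delta')=x(\Delta)-1$.
   Context: For a partition $\lambda$, $\lambda'$ is its conjugate. With $\alpha_1\le2$, $\alpha'=(\alpha'_1,\alpha'_2)$. Place the positive integers on a horizontal line in decreasing order from left to right. An arc is a pair $(m,n)$ of positive integers with $m>n$ (source $m$, target $n$), drawn as an upper semicircle; a pole at $n$ is a vertical half-line at $n$, regarded as an arc $(\infty,n)$. An arc diagram of type $(\alpha,\beta,\gamma)$ is a finite multiset of $\alpha'_2$ arcs and $\alpha'_1-\alpha'_2$ poles such that for each $i\ge1$ the number of arcs and poles with source or target $i$ equals $\beta'_i-\gamma'_i$; $\mathcal D_{\alpha,\gamma}^\beta$ is the set of them. Members $(m,n),(k,r)$ cross iff $r<n<k<m$ or $n<r<m<k$; $x(\Delta)$ is the number of crossing pairs in $\Delta$. Moves: for $a>b>c>d$, (A) replaces arcs $(a,c),(b,d)$ by $(a,d),(b,c)$; (C) replaces them by $(a,b),(c,d)$; for $a>b>c$, (B)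 replaces arc $(a,c)$ and pole $(\infty,b)$ by arc $(a,b)$ and pole $(\infty,c)$; (D) replaces them by arc $(b,c)$ and pole $(\infty,a)$; other members unchanged. $\Delta\le_{\rm arc}\Delta'$ iff $\Delta$ is obtained from $\Delta'$ by a finite (possibly empty) sequence of moves. (An LR-tableau of type $(\alpha,\beta,\gamma)$ is a filling of the skew diagram $\beta\setminus\gamma$, whose $i$-th row has $\beta'_i-\gamma'_i$ boxes, as in the usual definition.) *)

theory Defs
  imports Main "HOL-Library.Multiset" "HOL-Library.Extended_Nat"
begin

definition is_partition :: "nat list \<Rightarrow> bool" where
  "is_partition l \<longleftrightarrow> (\<forall>x\<in>set l. 0 < x) \<and> sorted_wrt (\<ge>) l"

text \<open>Conjugate partition, 1-indexed: conj l i = l'_i = number of parts \<ge> i.\<close>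
definition conj :: "nat list \<Rightarrow> nat \<Rightarrow> nat" where
  "conj l i = length (filter (\<lambda>x. i \<le> x) l)"

text \<open>Members of arc diagrams: pairs (source, target); source \<infinity> means a pole.\<close>
type_synonym member = "enat \<times> nat"

definition is_arc :: "member \<Rightarrow> bool" where
  "is_arc p \<longleftrightarrow> fst p \<noteq> \<infinity> \<and> enat (snd p) < fst p \<and> 1 \<le> snd p"

definition is_pole :: "member \<Rightarrow> bool" where
  "is_pole p \<longleftrightarrow> fst p = \<infinity> \<and> 1 \<le> snd p"

definition incid :: "member multiset \<Rightarrow> nat \<Rightarrow> nat" where
  "incid D i = size (filter_mset (\<lambda>p. fst p = enat i \<or> snd p = i) D)"

definition arc_diagrams :: "nat list \<Rightarrow> nat list \<Rightarrow> nat list \<Rightarrow> member multiset set" where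
  "arc_diagrams \<alpha> \<beta> \<gamma> = {D.
     (\<forall>p\<in>#D. is_arc p \<or> is_pole p) \<and>
     size (filter_mset is_arc D) = conj \<alpha> 2 \<and>
     size (filter_mset is_pole D) = conj \<alpha> 1 - conj \<alpha> 2 \<and>
     (\<forall>i\<ge>1. int (incid D i) = int (conj \<beta> i) - int (conj \<gamma> i))}"

definition crosses :: "member \<Rightarrow> member \<Rightarrow> bool" where
  "crosses p q \<longleftrightarrow> (let m = fst p; n = snd p; k = fst q; r = snd q in
     (r < n \<and> enat n < k \<and> k < m) \<or> (n < r \<and> enat r < m \<and> m < k))"

text \<open>Number of crossing (unordered) pairs of members; each pair is counted twice below.\<close>
definition xing :: "member multiset \<Rightarrow> nat" where
  "xing D = sum_mset (image_mset (\<lambda>p. size (filter_mset (crosses p) D)) D) div 2"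

text \<open>arc_move D D': D' is obtained from D by a single move of type (A), (B), (C) or (D).\<close>
definition arc_move :: "member multiset \<Rightarrow> member multiset \<Rightarrow> bool" where
  "arc_move D D' \<longleftrightarrow>
    (\<exists>a b c d::nat. a > b \<and> b > c \<and> c > d \<and>
        {#(enat a, c), (enat b, d)#} \<subseteq># D \<and>
        (D' = D - {#(enat a, c), (enat b, d)#} + {#(enat a, d), (enat b, c)#} \<or>
         D' = D - {#(enat a, c), (enat b, d)#} + {#(enat a, b), (enat c, d)#})) \<or>
    (\<exists>a b c::nat. a > b \<and> b > c \<and>
        {#(enat a, c), (\<infinity>, b)#} \<subseteq># D \<and>
        (D' = D - {#(enat a, c), (\<infinity>, b)#} + {#(enat a, b), (\<infinity>, c)#} \<or>
         D' = D - {#(enat a, c), (\<infinity>, b)#} + {#(enat b, c), (\<infinity>, a)#}))"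

definition arc_le :: "member multiset \<Rightarrow> member multiset \<Rightarrow> bool" where
  "arc_le D' D \<longleftrightarrow> arc_move\<^sup>*\<^sup>* D D'"

definition arc_less :: "member multiset \<Rightarrow> member multiset \<Rightarrow> bool" where
  "arc_less D' D \<longleftrightarrow> arc_le D' D \<and> D' \<noteq> D"

end

theory Submission
  imports Defs
begin

lemma crosses_sym: "crosses p q = crosses q p"
  by (auto simp: crosses_def Let_def)

lemma crosses_irrefl: "\<not> crosses p p"
  by (auto simp: crosses_def Let_def)

definition cnt :: "member multiset \<Rightarrow> member \<Rightarrow> nat" where
  "cnt D p = size (filter_mset (crosses p) D)"

lemma size_filter_sum: "size (filter_mset P M) = sum_mset (image_mset (\<lambda>x. if P x then 1 else 0) M)"
  by (induction M) auto

lemma xing_add: "xing (add_mset x D) = xing D + cnt D x"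
proof -
  define T where "T M = sum_mset (image_mset (\<lambda>p. size (filter_mset (crosses p) M)) M)" for M
  have xT: "xing M = T M div 2" for M by (simp add: xing_def T_def)
  have "sum_mset (image_mset (\<lambda>p. size (filter_mset (crosses p) (add_mset x D))) D)
       = sum_mset (image_mset (\<lambda>p. size (filter_mset (crosses p) D) + (if crosses p x then 1 else 0)) D)"
    by (rule arg_cong[where f=sum_mset], rule image_mset_cong) auto
  also have "\<dots> = T D + sum_mset (image_mset (\<lambda>p. if crosses x p then 1 else 0) D)"
    by (simp add: T_def sum_mset.distrib crosses_sym[of _ x])
  also have "\<dots> = T D + cnt D x" by (simp add: cnt_def size_filter_sum)
  finally have s: "sum_mset (image_mset (\<lambda>p. size (filter_mset (crosses p) (add_mset x D))) D)
      = T D + cnt D x" .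
  have "T (add_mset x D) = T D + 2 * cnt D x"
    using s by (simp add: T_def cnt_def crosses_irrefl)
  then show ?thesis by (simp add: xT)
qed

definition pc :: "member \<Rightarrow> member \<Rightarrow> member \<Rightarrow> nat" where
  "pc p q e = (if crosses p e then 1 else 0) + (if crosses q e then 1 else 0)"

lemma xing_pair: "xing (add_mset p (add_mset q R)) =
   xing R + sum_mset (image_mset (pc p q) R) + (if crosses p q then 1 else 0)"
  by (simp add: xing_add cnt_def size_filter_sum pc_def[abs_def] sum_mset.distrib add_ac)

lemma xing_swap:
  assumes le: "\<And>e. e \<in># R \<Longrightarrow> pc p' q' e \<le> pc p q e"
    and c1: "crosses p q" and c2: "\<not> crosses p' q'"
  shows "xing (add_mset p' (add_mset q' R)) < xing (add_mset p (add_mset q R)) \<and>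
    (xing (add_mset p' (add_mset q' R)) + 1 \<noteq> xing (add_mset p (add_mset q R)) \<longrightarrow> (\<exists>e. e \<in># R \<and> pc p' q' e \<noteq> pc p q e))"
proof -
  have m: "sum_mset (image_mset (pc p' q') R) \<le> sum_mset (image_mset (pc p q) R)"
    using le by (rule sum_mset_mono)
  have 1: "xing (add_mset p' (add_mset q' R)) < xing (add_mset p (add_mset q R))"
    using m c1 c2 by (simp add: xing_pair)
  have 2: "\<exists>e. e \<in># R \<and> pc p' q' e \<noteq> pc p q e"
    if ne: "xing (add_mset p' (add_mset q' R)) + 1 \<noteq> xing (add_mset p (add_mset q R))"
  proof (rule ccontr)
    assume a: "\<not> (\<exists>e. e \<in># R \<and> pc p' q' e \<noteq> pc p q e)"
    then have "image_mset (pc p' q') R = image_mset (pc p q) R" by (intro image_mset_cong) auto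
    then show False using ne c1 c2 by (simp add: xing_pair)
  qed
  show ?thesis using 1 2 by blast
qed

definition wfd :: "member multiset \<Rightarrow> bool" where
  "wfd D \<longleftrightarrow> (\<forall>p\<in>#D. is_arc p \<or> is_pole p) \<and> (\<forall>i. incid D i \<le> 1)"

lemma incid_add[simp]: "incid (M + N) i = incid M i + incid N i"
  by (simp add: incid_def)

lemma incid_zero: "incid R i = 0 \<Longrightarrow> e \<in># R \<Longrightarrow> fst e \<noteq> enat i \<and> snd e \<noteq> i"
  by (cases e) (fastforce simp: incid_def)

lemma generic:
  assumes w: "wfd D" and sub: "{#p, q#} \<subseteq># D"
    and c1: "crosses p q" and c2: "\<not> crosses p' q'"
    and pe: "\<And>e. is_arc e \<or> is_pole e \<Longrightarrow> (\<And>i. incid {#p, q#} i \<noteq> 0 \<Longrightarrow> fst e \<noteq> enat i \<and> snd e \<noteq> i)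
       \<Longrightarrow> pc p' q' e \<le> pc p q e \<and> (pc p' q' e \<noteq> pc p q e \<longrightarrow> Q e)"
  shows "xing (D - {#p, q#} + {#p', q'#}) < xing D \<and>
    (xing (D - {#p, q#} + {#p', q'#}) + 1 \<noteq> xing D \<longrightarrow> (\<exists>e. e \<in># D - {#p, q#} \<and> Q e))"
proof -
  define R where "R = D - {#p, q#}"
  have DR: "D = R + {#p, q#}" using subset_mset.diff_add[OF sub] by (simp add: R_def)
  have D1: "D = add_mset p (add_mset q R)" using DR by simp
  have D2: "D - {#p, q#} + {#p', q'#} = add_mset p' (add_mset q' R)" by (simp add: R_def)
  have pe': "pc p' q' e \<le> pc p q e \<and> (pc p' q' e \<noteq> pc p q e \<longrightarrow> Q e)" if e: "e \<in># R" for e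
  proof (rule pe)
    show "is_arc e \<or> is_pole e" using w e DR by (auto simp: wfd_def)
    fix i assume i: "incid {#p, q#} i \<noteq> 0"
    have "incid D i \<le> 1" using w by (simp add: wfd_def)
    moreover have "incid D i = incid R i + incid {#p, q#} i" by (subst DR) (rule incid_add)
    ultimately have "incid R i = 0" using i by linarith
    then show "fst e \<noteq> enat i \<and> snd e \<noteq> i" using incid_zero e by blast
  qed
  have "xing (add_mset p' (add_mset q' R)) < xing (add_mset p (add_mset q R)) \<and>
    (xing (add_mset p' (add_mset q' R)) + 1 \<noteq> xing (add_mset p (add_mset q R)) \<longrightarrow> (\<exists>e. e \<in># R \<and> pc p' q' e \<noteq> pc p q e))"
    using pe' c1 c2 by (intro xing_swap) auto
  then have X: "xing (add_mset p' (add_mset q' R)) < xing D \<and>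
    (xing (add_mset p' (add_mset q' R)) + 1 \<noteq> xing D \<longrightarrow> (\<exists>e. e \<in># R \<and> pc p' q' e \<noteq> pc p q e))"
    using D1 by metis
  have G: "D - {#p, q#} = R" "R + {#p', q'#} = add_mset p' (add_mset q' R)" by (simp_all add: R_def)
  show ?thesis unfolding G using X pe' by blast
qed

lemma AD_wfd:
  assumes H: "\<forall>i\<ge>1. conj \<beta> i \<le> conj \<gamma> i + 1" and D: "D \<in> arc_diagrams \<alpha> \<beta> \<gamma>"
  shows "wfd D"
proof -
  have m: "\<forall>p\<in>#D. is_arc p \<or> is_pole p" using D by (simp add: arc_diagrams_def)
  have "incid D i \<le> 1" for i
  proof (cases "i \<ge> 1")
    case True
    then have "int (incid D i) = int (conj \<beta> i) - int (conj \<gamma> i)" using D by (simp add: arc_diagrams_def)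
    moreover have "conj \<beta> i \<le> conj \<gamma> i + 1" using H True by simp
    ultimately show ?thesis by linarith
  next
    case False
    then have i0: "i = 0" by simp
    have "filter_mset (\<lambda>p. fst p = enat i \<or> snd p = i) D = {#}"
      using m i0 by (auto simp: is_arc_def is_pole_def zero_enat_def[symmetric])
    then have "incid D i = 0" unfolding incid_def by (simp only: size_empty)
    then show ?thesis by simp
  qed
  then show ?thesis using m by (simp add: wfd_def)
qed

lemma cr_ee: "crosses (enat m, n) (enat k, r) \<longleftrightarrow> (r<n \<and> n<k \<and> k<m) \<or> (n<r \<and> r<m \<and> m<k)"
  by (simp add: crosses_def)
lemma cr_ei: "crosses (enat m, n) (\<infinity>, r) \<longleftrightarrow> n<r \<and> r<m"
  by (auto simp: crosses_def)
lemma cr_ie: "crosses (\<infinity>, n) (enat k, r) \<longleftrightarrow> r<n \<and> n<k"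
  by (auto simp: crosses_def)
lemma cr_ii: "crosses (\<infinity>, n) (\<infinity>, r) \<longleftrightarrow> False"
  by (auto simp: crosses_def)

lemma pc_crit:
  assumes "crosses p' e \<and> crosses q' e \<longrightarrow> crosses p e \<and> crosses q e"
    "crosses p' e \<or> crosses q' e \<longrightarrow> crosses p e \<or> crosses q e"
    "\<not> Q \<longrightarrow> (crosses p e \<and> crosses q e \<longrightarrow> crosses p' e \<and> crosses q' e) \<and> (crosses p e \<or> crosses q e \<longrightarrow> crosses p' e \<or> crosses q' e)"
  shows "pc p' q' e \<le> pc p q e \<and> (pc p' q' e \<noteq> pc p q e \<longrightarrow> Q)"
  using assms unfolding pc_def by (auto split: if_splits)

lemma eA_enat:
  assumes o: "d < c" "c < b" "b < a" "t < s" "s \<noteq> a" "s \<noteq> b" "s \<noteq> c" "s \<noteq> d" "t \<noteq> a" "t \<noteq> b" "t \<noteq> c" "t \<noteq> d"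
  shows "pc (enat a, d) (enat b, c) (enat s, t) \<le> pc (enat a, c) (enat b, d) (enat s, t) \<and>
    (pc (enat a, d) (enat b, c) (enat s, t) \<noteq> pc (enat a, c) (enat b, d) (enat s, t) \<longrightarrow> (b < s \<and> s < a \<and> d < t \<and> t < c))"
proof -
  have cv: "(s<a) = (\<not> a<s)" "(s<b) = (\<not> b<s)" "(s<c) = (\<not> c<s)" "(s<d) = (\<not> d<s)" "(t<a) = (\<not> a<t)" "(t<b) = (\<not> b<t)" "(t<c) = (\<not> c<t)" "(t<d) = (\<not> d<t)"
    using o by auto
  have mono: "a<s \<longrightarrow> b<s" "b<s \<longrightarrow> c<s" "c<s \<longrightarrow> d<s" "a<t \<longrightarrow> b<t" "b<t \<longrightarrow> c<t" "c<t \<longrightarrow> d<t" "a<t \<longrightarrow> a<s" "b<t \<longrightarrow> b<s" "c<t \<longrightarrow> c<s" "d<t \<longrightarrow> d<s"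
    using o by auto
  show ?thesis
    apply (rule pc_crit)
    unfolding cr_ee cr_ei cr_ie cr_ii cv using mono o(1-3) by blast+
qed

lemma eA_inf:
  assumes o: "d < c" "c < b" "b < a" "t \<noteq> a" "t \<noteq> b" "t \<noteq> c" "t \<noteq> d"
  shows "pc (enat a, d) (enat b, c) (\<infinity>, t) \<le> pc (enat a, c) (enat b, d) (\<infinity>, t) \<and>
    (pc (enat a, d) (enat b, c) (\<infinity>, t) \<noteq> pc (enat a, c) (enat b, d) (\<infinity>, t) \<longrightarrow> (False))"
proof -
  have cv: "(t<a) = (\<not> a<t)" "(t<b) = (\<not> b<t)" "(t<c) = (\<not> c<t)" "(t<d) = (\<not> d<t)"
    using o by auto
  have mono: "a<t \<longrightarrow> b<t" "b<t \<longrightarrow> c<t" "c<t \<longrightarrow> d<t"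
    using o by auto
  show ?thesis
    apply (rule pc_crit)
    unfolding cr_ee cr_ei cr_ie cr_ii cv using mono o(1-3) by blast+
qed

lemma eA:
  assumes o: "d < c" "c < b" "b < a" and m: "is_arc e \<or> is_pole e"
    and h: "\<And>i. incid {#(enat a, c), (enat b, d)#} i \<noteq> 0 \<Longrightarrow> fst e \<noteq> enat i \<and> snd e \<noteq> i"
  shows "pc (enat a, d) (enat b, c) e \<le> pc (enat a, c) (enat b, d) e \<and>
    (pc (enat a, d) (enat b, c) e \<noteq> pc (enat a, c) (enat b, d) e \<longrightarrow>
      (\<exists>s t. e = (enat s, t) \<and> b < s \<and> s < a \<and> d < t \<and> t < c))"
proof -
  have "fst e \<noteq> enat x \<and> snd e \<noteq> x" if "x \<in> {a,b,c,d}" for x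
    using that o by (intro h) (auto simp: incid_def)
  then have nq: "fst e \<noteq> enat a" "fst e \<noteq> enat b" "fst e \<noteq> enat c" "fst e \<noteq> enat d" "snd e \<noteq> a" "snd e \<noteq> b" "snd e \<noteq> c" "snd e \<noteq> d" by auto
  obtain E t where e: "e = (E, t)" by fastforce
  show ?thesis
  proof (cases E)
    case (enat s)
    have ts: "t < s" using m unfolding e enat by (auto simp: is_arc_def is_pole_def)
    have nq': "s \<noteq> a" "s \<noteq> b" "s \<noteq> c" "s \<noteq> d" "t \<noteq> a" "t \<noteq> b" "t \<noteq> c" "t \<noteq> d" using nq unfolding e enat by auto
    show ?thesis using eA_enat[OF o ts nq'] unfolding e enat by auto
  next
    case infinity
    have nq': "t \<noteq> a" "t \<noteq> b" "t \<noteq> c" "t \<noteq> d" using nq unfolding e by auto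
    show ?thesis using eA_inf[OF o nq'] unfolding e infinity by auto
  qed
qed

lemma eC_enat:
  assumes o: "d < c" "c < b" "b < a" "t < s" "s \<noteq> a" "s \<noteq> b" "s \<noteq> c" "s \<noteq> d" "t \<noteq> a" "t \<noteq> b" "t \<noteq> c" "t \<noteq> d"
  shows "pc (enat a, b) (enat c, d) (enat s, t) \<le> pc (enat a, c) (enat b, d) (enat s, t) \<and>
    (pc (enat a, b) (enat c, d) (enat s, t) \<noteq> pc (enat a, c) (enat b, d) (enat s, t) \<longrightarrow> ((a < s \<and> c < t \<and> t < b) \<or> (c < s \<and> s < b \<and> t < d)))"
proof -
  have cv: "(s<a) = (\<not> a<s)" "(s<b) = (\<not> b<s)" "(s<c) = (\<not> c<s)" "(s<d) = (\<not> d<s)" "(t<a) = (\<not> a<t)" "(t<b) = (\<not> b<t)" "(t<c) = (\<not> c<t)" "(t<d) = (\<not> d<t)"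
    using o by auto
  have mono: "a<s \<longrightarrow> b<s" "b<s \<longrightarrow> c<s" "c<s \<longrightarrow> d<s" "a<t \<longrightarrow> b<t" "b<t \<longrightarrow> c<t" "c<t \<longrightarrow> d<t" "a<t \<longrightarrow> a<s" "b<t \<longrightarrow> b<s" "c<t \<longrightarrow> c<s" "d<t \<longrightarrow> d<s"
    using o by auto
  show ?thesis
    apply (rule pc_crit)
    unfolding cr_ee cr_ei cr_ie cr_ii cv using mono o(1-3) by blast+
qed

lemma eC_inf:
  assumes o: "d < c" "c < b" "b < a" "t \<noteq> a" "t \<noteq> b" "t \<noteq> c" "t \<noteq> d"
  shows "pc (enat a, b) (enat c, d) (\<infinity>, t) \<le> pc (enat a, c) (enat b, d) (\<infinity>, t) \<and>
    (pc (enat a, b) (enat c, d) (\<infinity>, t) \<noteq> pc (enat a, c) (enat b, d) (\<infinity>, t) \<longrightarrow> (c < t \<and> t < b))"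
proof -
  have cv: "(t<a) = (\<not> a<t)" "(t<b) = (\<not> b<t)" "(t<c) = (\<not> c<t)" "(t<d) = (\<not> d<t)"
    using o by auto
  have mono: "a<t \<longrightarrow> b<t" "b<t \<longrightarrow> c<t" "c<t \<longrightarrow> d<t"
    using o by auto
  show ?thesis
    apply (rule pc_crit)
    unfolding cr_ee cr_ei cr_ie cr_ii cv using mono o(1-3) by blast+
qed

lemma eC:
  assumes o: "d < c" "c < b" "b < a" and m: "is_arc e \<or> is_pole e"
    and h: "\<And>i. incid {#(enat a, c), (enat b, d)#} i \<noteq> 0 \<Longrightarrow> fst e \<noteq> enat i \<and> snd e \<noteq> i"
  shows "pc (enat a, b) (enat c, d) e \<le> pc (enat a, c) (enat b, d) e \<and>
    (pc (enat a, b) (enat c, d) e \<noteq> pc (enat a, c) (enat b, d) e \<longrightarrow>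
      (\<exists>s t. e = (enat s, t) \<and> a < s \<and> c < t \<and> t < b) \<or>
      (\<exists>t. e = (\<infinity>, t) \<and> c < t \<and> t < b) \<or>
      (\<exists>s t. e = (enat s, t) \<and> c < s \<and> s < b \<and> t < d))"
proof -
  have "fst e \<noteq> enat x \<and> snd e \<noteq> x" if "x \<in> {a,b,c,d}" for x
    using that o by (intro h) (auto simp: incid_def)
  then have nq: "fst e \<noteq> enat a" "fst e \<noteq> enat b" "fst e \<noteq> enat c" "fst e \<noteq> enat d" "snd e \<noteq> a" "snd e \<noteq> b" "snd e \<noteq> c" "snd e \<noteq> d" by auto
  obtain E t where e: "e = (E, t)" by fastforce
  show ?thesis
  proof (cases E)
    case (enat s)
    have ts: "t < s" using m unfolding e enat by (auto simp: is_arc_def is_pole_def)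
    have nq': "s \<noteq> a" "s \<noteq> b" "s \<noteq> c" "s \<noteq> d" "t \<noteq> a" "t \<noteq> b" "t \<noteq> c" "t \<noteq> d" using nq unfolding e enat by auto
    show ?thesis using eC_enat[OF o ts nq'] unfolding e enat by auto
  next
    case infinity
    have nq': "t \<noteq> a" "t \<noteq> b" "t \<noteq> c" "t \<noteq> d" using nq unfolding e by auto
    show ?thesis using eC_inf[OF o nq'] unfolding e infinity by auto
  qed
qed

lemma eB_enat:
  assumes o: "c < b" "b < a" "t < s" "s \<noteq> a" "s \<noteq> b" "s \<noteq> c" "t \<noteq> a" "t \<noteq> b" "t \<noteq> c"
  shows "pc (enat a, b) (\<infinity>, c) (enat s, t) \<le> pc (enat a, c) (\<infinity>, b) (enat s, t) \<and>
    (pc (enat a, b) (\<infinity>, c) (enat s, t) \<noteq> pc (enat a, c) (\<infinity>, b) (enat s, t) \<longrightarrow> (a < s \<and> c < t \<and> t < b))"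
proof -
  have cv: "(s<a) = (\<not> a<s)" "(s<b) = (\<not> b<s)" "(s<c) = (\<not> c<s)" "(t<a) = (\<not> a<t)" "(t<b) = (\<not> b<t)" "(t<c) = (\<not> c<t)"
    using o by auto
  have mono: "a<s \<longrightarrow> b<s" "b<s \<longrightarrow> c<s" "a<t \<longrightarrow> b<t" "b<t \<longrightarrow> c<t" "a<t \<longrightarrow> a<s" "b<t \<longrightarrow> b<s" "c<t \<longrightarrow> c<s"
    using o by auto
  show ?thesis
    apply (rule pc_crit)
    unfolding cr_ee cr_ei cr_ie cr_ii cv using mono o(1-2) by blast+
qed

lemma eB_inf:
  assumes o: "c < b" "b < a" "t \<noteq> a" "t \<noteq> b" "t \<noteq> c"
  shows "pc (enat a, b) (\<infinity>, c) (\<infinity>, t) \<le> pc (enat a, c) (\<infinity>, b) (\<infinity>, t) \<and>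
    (pc (enat a, b) (\<infinity>, c) (\<infinity>, t) \<noteq> pc (enat a, c) (\<infinity>, b) (\<infinity>, t) \<longrightarrow> (c < t \<and> t < b))"
proof -
  have cv: "(t<a) = (\<not> a<t)" "(t<b) = (\<not> b<t)" "(t<c) = (\<not> c<t)"
    using o by auto
  have mono: "a<t \<longrightarrow> b<t" "b<t \<longrightarrow> c<t"
    using o by auto
  show ?thesis
    apply (rule pc_crit)
    unfolding cr_ee cr_ei cr_ie cr_ii cv using mono o(1-2) by blast+
qed

lemma eB:
  assumes o: "c < b" "b < a" and m: "is_arc e \<or> is_pole e"
    and h: "\<And>i. incid {#(enat a, c), (\<infinity>, b)#} i \<noteq> 0 \<Longrightarrow> fst e \<noteq> enat i \<and> snd e \<noteq> i"
  shows "pc (enat a, b) (\<infinity>, c) e \<le> pc (enat a, c) (\<infinity>, b) e \<and>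
    (pc (enat a, b) (\<infinity>, c) e \<noteq> pc (enat a, c) (\<infinity>, b) e \<longrightarrow>
      (\<exists>s t. e = (enat s, t) \<and> a < s \<and> c < t \<and> t < b) \<or>
      (\<exists>t. e = (\<infinity>, t) \<and> c < t \<and> t < b))"
proof -
  have "fst e \<noteq> enat x \<and> snd e \<noteq> x" if "x \<in> {a,b,c}" for x
    using that o by (intro h) (auto simp: incid_def)
  then have nq: "fst e \<noteq> enat a" "fst e \<noteq> enat b" "fst e \<noteq> enat c" "snd e \<noteq> a" "snd e \<noteq> b" "snd e \<noteq> c" by auto
  obtain E t where e: "e = (E, t)" by fastforce
  show ?thesis
  proof (cases E)
    case (enat s)
    have ts: "t < s" using m unfolding e enat by (auto simp: is_arc_def is_pole_def)
    have nq': "s \<noteq> a" "s \<noteq> b" "s \<noteq> c" "t \<noteq> a" "t \<noteq> b" "t \<noteq> c" using nq unfolding e enat by auto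
    show ?thesis using eB_enat[OF o ts nq'] unfolding e enat by auto
  next
    case infinity
    have nq': "t \<noteq> a" "t \<noteq> b" "t \<noteq> c" using nq unfolding e by auto
    show ?thesis using eB_inf[OF o nq'] unfolding e infinity by auto
  qed
qed

lemma eD_enat:
  assumes o: "c < b" "b < a" "t < s" "s \<noteq> a" "s \<noteq> b" "s \<noteq> c" "t \<noteq> a" "t \<noteq> b" "t \<noteq> c"
  shows "pc (enat b, c) (\<infinity>, a) (enat s, t) \<le> pc (enat a, c) (\<infinity>, b) (enat s, t) \<and>
    (pc (enat b, c) (\<infinity>, a) (enat s, t) \<noteq> pc (enat a, c) (\<infinity>, b) (enat s, t) \<longrightarrow> (b < s \<and> s < a \<and> t < c))"
proof -
  have cv: "(s<a) = (\<not> a<s)" "(s<b) = (\<not> b<s)" "(s<c) = (\<not> c<s)" "(t<a) = (\<not> a<t)" "(t<b) = (\<not> b<t)" "(t<c) = (\<not> c<t)"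
    using o by auto
  have mono: "a<s \<longrightarrow> b<s" "b<s \<longrightarrow> c<s" "a<t \<longrightarrow> b<t" "b<t \<longrightarrow> c<t" "a<t \<longrightarrow> a<s" "b<t \<longrightarrow> b<s" "c<t \<longrightarrow> c<s"
    using o by auto
  show ?thesis
    apply (rule pc_crit)
    unfolding cr_ee cr_ei cr_ie cr_ii cv using mono o(1-2) by blast+
qed

lemma eD_inf:
  assumes o: "c < b" "b < a" "t \<noteq> a" "t \<noteq> b" "t \<noteq> c"
  shows "pc (enat b, c) (\<infinity>, a) (\<infinity>, t) \<le> pc (enat a, c) (\<infinity>, b) (\<infinity>, t) \<and>
    (pc (enat b, c) (\<infinity>, a) (\<infinity>, t) \<noteq> pc (enat a, c) (\<infinity>, b) (\<infinity>, t) \<longrightarrow> (b < t \<and> t < a))"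
proof -
  have cv: "(t<a) = (\<not> a<t)" "(t<b) = (\<not> b<t)" "(t<c) = (\<not> c<t)"
    using o by auto
  have mono: "a<t \<longrightarrow> b<t" "b<t \<longrightarrow> c<t"
    using o by auto
  show ?thesis
    apply (rule pc_crit)
    unfolding cr_ee cr_ei cr_ie cr_ii cv using mono o(1-2) by blast+
qed

lemma eD:
  assumes o: "c < b" "b < a" and m: "is_arc e \<or> is_pole e"
    and h: "\<And>i. incid {#(enat a, c), (\<infinity>, b)#} i \<noteq> 0 \<Longrightarrow> fst e \<noteq> enat i \<and> snd e \<noteq> i"
  shows "pc (enat b, c) (\<infinity>, a) e \<le> pc (enat a, c) (\<infinity>, b) e \<and>
    (pc (enat b, c) (\<infinity>, a) e \<noteq> pc (enat a, c) (\<infinity>, b) e \<longrightarrow>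
      (\<exists>s t. e = (enat s, t) \<and> b < s \<and> s < a \<and> t < c) \<or>
      (\<exists>t. e = (\<infinity>, t) \<and> b < t \<and> t < a))"
proof -
  have "fst e \<noteq> enat x \<and> snd e \<noteq> x" if "x \<in> {a,b,c}" for x
    using that o by (intro h) (auto simp: incid_def)
  then have nq: "fst e \<noteq> enat a" "fst e \<noteq> enat b" "fst e \<noteq> enat c" "snd e \<noteq> a" "snd e \<noteq> b" "snd e \<noteq> c" by auto
  obtain E t where e: "e = (E, t)" by fastforce
  show ?thesis
  proof (cases E)
    case (enat s)
    have ts: "t < s" using m unfolding e enat by (auto simp: is_arc_def is_pole_def)
    have nq': "s \<noteq> a" "s \<noteq> b" "s \<noteq> c" "t \<noteq> a" "t \<noteq> b" "t \<noteq> c" using nq unfolding e enat by auto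
    show ?thesis using eD_enat[OF o ts nq'] unfolding e enat by auto
  next
    case infinity
    have nq': "t \<noteq> a" "t \<noteq> b" "t \<noteq> c" using nq unfolding e by auto
    show ?thesis using eD_inf[OF o nq'] unfolding e infinity by auto
  qed
qed

lemma mvA: "b < a \<Longrightarrow> c < b \<Longrightarrow> d < c \<Longrightarrow> M = add_mset (enat a, c) (add_mset (enat b, d) R) \<Longrightarrow>
   M' = add_mset (enat a, d) (add_mset (enat b, c) R) \<Longrightarrow> arc_move M M'"
  unfolding arc_move_def
  apply (rule disjI1)
  apply (rule exI[of _ a], rule exI[of _ b], rule exI[of _ c], rule exI[of _ d])
  by simp

lemma mvC: "b < a \<Longrightarrow> c < b \<Longrightarrow> d < c \<Longrightarrow> M = add_mset (enat a, c) (add_mset (enat b, d) R) \<Longrightarrow>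
   M' = add_mset (enat a, b) (add_mset (enat c, d) R) \<Longrightarrow> arc_move M M'"
  unfolding arc_move_def
  apply (rule disjI1)
  apply (rule exI[of _ a], rule exI[of _ b], rule exI[of _ c], rule exI[of _ d])
  by simp

lemma mvB: "b < a \<Longrightarrow> c < b \<Longrightarrow> M = add_mset (enat a, c) (add_mset (\<infinity>, b) R) \<Longrightarrow>
   M' = add_mset (enat a, b) (add_mset (\<infinity>, c) R) \<Longrightarrow> arc_move M M'"
  unfolding arc_move_def
  apply (rule disjI2)
  apply (rule exI[of _ a], rule exI[of _ b], rule exI[of _ c])
  by simp

lemma mvD: "b < a \<Longrightarrow> c < b \<Longrightarrow> M = add_mset (enat a, c) (add_mset (\<infinity>, b) R) \<Longrightarrow>
   M' = add_mset (enat b, c) (add_mset (\<infinity>, a) R) \<Longrightarrow> arc_move M M'"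
  unfolding arc_move_def
  apply (rule disjI2)
  apply (rule exI[of _ a], rule exI[of _ b], rule exI[of _ c])
  by simp

lemma path3: "arc_move X E1 \<Longrightarrow> arc_move E1 E2 \<Longrightarrow> arc_move E2 Y \<Longrightarrow> \<exists>E. arc_move X E \<and> arc_move\<^sup>+\<^sup>+ E Y"
  by (meson tranclp.r_into_trancl tranclp.trancl_into_trancl)

lemma path2: "arc_move X E1 \<Longrightarrow> arc_move E1 Y \<Longrightarrow> \<exists>E. arc_move X E \<and> arc_move\<^sup>+\<^sup>+ E Y"
  by (meson tranclp.r_into_trancl)
lemma pathA:
  assumes o: "s < a" "b < s" "c < b" "t < c" "d < t"
  shows "\<exists>E. arc_move (add_mset (enat a, c) (add_mset (enat b, d) (add_mset (enat s, t) R))) E \<and>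
    arc_move\<^sup>+\<^sup>+ E (add_mset (enat a, d) (add_mset (enat b, c) (add_mset (enat s, t) R)))"
proof (rule path3)
  show "arc_move (add_mset (enat a, c) (add_mset (enat b, d) (add_mset (enat s, t) R)))
     (add_mset (enat a, t) (add_mset (enat b, d) (add_mset (enat s, c) R)))"
    by (rule mvA[where a=a and b=s and c=c and d=t and R="add_mset (enat b, d) R"]) (use o in \<open>auto simp: add_mset_commute\<close>)
  show "arc_move (add_mset (enat a, t) (add_mset (enat b, d) (add_mset (enat s, c) R)))
     (add_mset (enat a, t) (add_mset (enat b, c) (add_mset (enat s, d) R)))"
    by (rule mvA[where a=s and b=b and c=c and d=d and R="add_mset (enat a, t) R"]) (use o in \<open>auto simp: add_mset_commute\<close>)
  show "arc_move (add_mset (enat a, t) (add_mset (enat b, c) (add_mset (enat s, d) R)))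
     (add_mset (enat a, d) (add_mset (enat b, c) (add_mset (enat s, t) R)))"
    by (rule mvA[where a=a and b=s and c=t and d=d and R="add_mset (enat b, c) R"]) (use o in \<open>auto simp: add_mset_commute\<close>)
qed

lemma pathC1:
  assumes o: "a < s" "b < a" "t < b" "c < t" "d < c"
  shows "\<exists>E. arc_move (add_mset (enat a, c) (add_mset (enat b, d) (add_mset (enat s, t) R))) E \<and>
    arc_move\<^sup>+\<^sup>+ E (add_mset (enat a, b) (add_mset (enat c, d) (add_mset (enat s, t) R)))"
proof (rule path3)
  show "arc_move (add_mset (enat a, c) (add_mset (enat b, d) (add_mset (enat s, t) R)))
     (add_mset (enat a, t) (add_mset (enat b, d) (add_mset (enat s, c) R)))"
    by (rule mvA[where a=s and b=a and c=t and d=c and R="add_mset (enat b, d) R"]) (use o in \<open>auto simp: add_mset_commute\<close>)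
  show "arc_move (add_mset (enat a, t) (add_mset (enat b, d) (add_mset (enat s, c) R)))
     (add_mset (enat a, t) (add_mset (enat c, d) (add_mset (enat s, b) R)))"
    by (rule mvC[where a=s and b=b and c=c and d=d and R="add_mset (enat a, t) R"]) (use o in \<open>auto simp: add_mset_commute\<close>)
  show "arc_move (add_mset (enat a, t) (add_mset (enat c, d) (add_mset (enat s, b) R)))
     (add_mset (enat a, b) (add_mset (enat c, d) (add_mset (enat s, t) R)))"
    by (rule mvA[where a=s and b=a and c=b and d=t and R="add_mset (enat c, d) R"]) (use o in \<open>auto simp: add_mset_commute\<close>)
qed

lemma pathC2:
  assumes o: "b < a" "t < b" "c < t" "d < c"
  shows "\<exists>E. arc_move (add_mset (enat a, c) (add_mset (enat b, d) (add_mset (\<infinity>, t) R))) E \<and>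
    arc_move\<^sup>+\<^sup>+ E (add_mset (enat a, b) (add_mset (enat c, d) (add_mset (\<infinity>, t) R)))"
proof (rule path3)
  show "arc_move (add_mset (enat a, c) (add_mset (enat b, d) (add_mset (\<infinity>, t) R)))
     (add_mset (enat a, t) (add_mset (enat b, d) (add_mset (\<infinity>, c) R)))"
    by (rule mvB[where a=a and b=t and c=c and R="add_mset (enat b, d) R"]) (use o in \<open>auto simp: add_mset_commute\<close>)
  show "arc_move (add_mset (enat a, t) (add_mset (enat b, d) (add_mset (\<infinity>, c) R)))
     (add_mset (enat a, b) (add_mset (enat t, d) (add_mset (\<infinity>, c) R)))"
    by (rule mvC[where a=a and b=b and c=t and d=d and R="add_mset (\<infinity>, c) R"]) (use o in \<open>auto simp: add_mset_commute\<close>)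
  show "arc_move (add_mset (enat a, b) (add_mset (enat t, d) (add_mset (\<infinity>, c) R)))
     (add_mset (enat a, b) (add_mset (enat c, d) (add_mset (\<infinity>, t) R)))"
    by (rule mvD[where a=t and b=c and c=d and R="add_mset (enat a, b) R"]) (use o in \<open>auto simp: add_mset_commute\<close>)
qed

lemma pathC3:
  assumes o: "b < a" "s < b" "c < s" "d < c" "t < d"
  shows "\<exists>E. arc_move (add_mset (enat a, c) (add_mset (enat b, d) (add_mset (enat s, t) R))) E \<and>
    arc_move\<^sup>+\<^sup>+ E (add_mset (enat a, b) (add_mset (enat c, d) (add_mset (enat s, t) R)))"
proof (rule path3)
  show "arc_move (add_mset (enat a, c) (add_mset (enat b, d) (add_mset (enat s, t) R)))
     (add_mset (enat a, c) (add_mset (enat b, t) (add_mset (enat s, d) R)))"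
    by (rule mvA[where a=b and b=s and c=d and d=t and R="add_mset (enat a, c) R"]) (use o in \<open>auto simp: add_mset_commute\<close>)
  show "arc_move (add_mset (enat a, c) (add_mset (enat b, t) (add_mset (enat s, d) R)))
     (add_mset (enat a, b) (add_mset (enat c, t) (add_mset (enat s, d) R)))"
    by (rule mvC[where a=a and b=b and c=c and d=t and R="add_mset (enat s, d) R"]) (use o in \<open>auto simp: add_mset_commute\<close>)
  show "arc_move (add_mset (enat a, b) (add_mset (enat c, t) (add_mset (enat s, d) R)))
     (add_mset (enat a, b) (add_mset (enat c, d) (add_mset (enat s, t) R)))"
    by (rule mvA[where a=s and b=c and c=d and d=t and R="add_mset (enat a, b) R"]) (use o in \<open>auto simp: add_mset_commute\<close>)
qed

lemma pathB1:
  assumes o: "a < s" "b < a" "t < b" "c < t"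
  shows "\<exists>E. arc_move (add_mset (enat a, c) (add_mset (\<infinity>, b) (add_mset (enat s, t) R))) E \<and>
    arc_move\<^sup>+\<^sup>+ E (add_mset (enat a, b) (add_mset (\<infinity>, c) (add_mset (enat s, t) R)))"
proof (rule path3)
  show "arc_move (add_mset (enat a, c) (add_mset (\<infinity>, b) (add_mset (enat s, t) R)))
     (add_mset (enat a, t) (add_mset (\<infinity>, b) (add_mset (enat s, c) R)))"
    by (rule mvA[where a=s and b=a and c=t and d=c and R="add_mset (\<infinity>, b) R"]) (use o in \<open>auto simp: add_mset_commute\<close>)
  show "arc_move (add_mset (enat a, t) (add_mset (\<infinity>, b) (add_mset (enat s, c) R)))
     (add_mset (enat a, t) (add_mset (\<infinity>, c) (add_mset (enat s, b) R)))"
    by (rule mvB[where a=s and b=b and c=c and R="add_mset (enat a, t) R"]) (use o in \<open>auto simp: add_mset_commute\<close>)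
  show "arc_move (add_mset (enat a, t) (add_mset (\<infinity>, c) (add_mset (enat s, b) R)))
     (add_mset (enat a, b) (add_mset (\<infinity>, c) (add_mset (enat s, t) R)))"
    by (rule mvA[where a=s and b=a and c=b and d=t and R="add_mset (\<infinity>, c) R"]) (use o in \<open>auto simp: add_mset_commute\<close>)
qed

lemma pathB2:
  assumes o: "b < a" "t < b" "c < t"
  shows "\<exists>E. arc_move (add_mset (enat a, c) (add_mset (\<infinity>, b) (add_mset (\<infinity>, t) R))) E \<and>
    arc_move\<^sup>+\<^sup>+ E (add_mset (enat a, b) (add_mset (\<infinity>, c) (add_mset (\<infinity>, t) R)))"
proof (rule path2)
  show "arc_move (add_mset (enat a, c) (add_mset (\<infinity>, b) (add_mset (\<infinity>, t) R)))
     (add_mset (enat a, t) (add_mset (\<infinity>, b) (add_mset (\<infinity>, c) R)))"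
    by (rule mvB[where a=a and b=t and c=c and R="add_mset (\<infinity>, b) R"]) (use o in \<open>auto simp: add_mset_commute\<close>)
  show "arc_move (add_mset (enat a, t) (add_mset (\<infinity>, b) (add_mset (\<infinity>, c) R)))
     (add_mset (enat a, b) (add_mset (\<infinity>, c) (add_mset (\<infinity>, t) R)))"
    by (rule mvB[where a=a and b=b and c=t and R="add_mset (\<infinity>, c) R"]) (use o in \<open>auto simp: add_mset_commute\<close>)
qed

lemma pathD1:
  assumes o: "t < a" "b < t" "c < b"
  shows "\<exists>E. arc_move (add_mset (enat a, c) (add_mset (\<infinity>, b) (add_mset (\<infinity>, t) R))) E \<and>
    arc_move\<^sup>+\<^sup>+ E (add_mset (enat b, c) (add_mset (\<infinity>, a) (add_mset (\<infinity>, t) R)))"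
proof (rule path2)
  show "arc_move (add_mset (enat a, c) (add_mset (\<infinity>, b) (add_mset (\<infinity>, t) R)))
     (add_mset (enat t, c) (add_mset (\<infinity>, b) (add_mset (\<infinity>, a) R)))"
    by (rule mvD[where a=a and b=t and c=c and R="add_mset (\<infinity>, b) R"]) (use o in \<open>auto simp: add_mset_commute\<close>)
  show "arc_move (add_mset (enat t, c) (add_mset (\<infinity>, b) (add_mset (\<infinity>, a) R)))
     (add_mset (enat b, c) (add_mset (\<infinity>, a) (add_mset (\<infinity>, t) R)))"
    by (rule mvD[where a=t and b=b and c=c and R="add_mset (\<infinity>, a) R"]) (use o in \<open>auto simp: add_mset_commute\<close>)
qed

lemma pathD2:
  assumes o: "s < a" "b < s" "c < b" "t < c"
  shows "\<exists>E. arc_move (add_mset (enat a, c) (add_mset (\<infinity>, b) (add_mset (enat s, t) R))) E \<and>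
    arc_move\<^sup>+\<^sup>+ E (add_mset (enat b, c) (add_mset (\<infinity>, a) (add_mset (enat s, t) R)))"
proof (rule path3)
  show "arc_move (add_mset (enat a, c) (add_mset (\<infinity>, b) (add_mset (enat s, t) R)))
     (add_mset (enat a, t) (add_mset (\<infinity>, b) (add_mset (enat s, c) R)))"
    by (rule mvA[where a=a and b=s and c=c and d=t and R="add_mset (\<infinity>, b) R"]) (use o in \<open>auto simp: add_mset_commute\<close>)
  show "arc_move (add_mset (enat a, t) (add_mset (\<infinity>, b) (add_mset (enat s, c) R)))
     (add_mset (enat a, t) (add_mset (enat b, c) (add_mset (\<infinity>, s) R)))"
    by (rule mvD[where a=s and b=b and c=c and R="add_mset (enat a, t) R"]) (use o in \<open>auto simp: add_mset_commute\<close>)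
  show "arc_move (add_mset (enat a, t) (add_mset (enat b, c) (add_mset (\<infinity>, s) R)))
     (add_mset (enat b, c) (add_mset (\<infinity>, a) (add_mset (enat s, t) R)))"
    by (rule mvD[where a=a and b=s and c=t and R="add_mset (enat b, c) R"]) (use o in \<open>auto simp: add_mset_commute\<close>)
qed
lemma typeA:
  assumes w: "wfd D" and o: "b < a" "c < b" "d < c"
    and sub: "{#(enat a, c), (enat b, d)#} \<subseteq># D"
    and D': "D' = D - {#(enat a, c), (enat b, d)#} + {#(enat a, d), (enat b, c)#}"
  shows "xing D' < xing D \<and> (xing D' + 1 \<noteq> xing D \<longrightarrow> (\<exists>E. arc_move D E \<and> arc_move\<^sup>+\<^sup>+ E D'))"
proof -
  define R where "R = D - {#(enat a, c), (enat b, d)#}"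
  have g: "xing D' < xing D \<and> (xing D' + 1 \<noteq> xing D \<longrightarrow> (\<exists>e. e \<in># R \<and>
      (\<exists>s t. e = (enat s, t) \<and> b < s \<and> s < a \<and> d < t \<and> t < c)))"
    unfolding D' R_def
    apply (rule generic[OF w sub])
    subgoal using o by (simp add: crosses_def)
    subgoal using o by (simp add: crosses_def)
    subgoal by (rule eA[OF o(3) o(2) o(1)]; assumption)
    done
  have DR: "D = add_mset (enat a, c) (add_mset (enat b, d) R)"
    using subset_mset.diff_add[OF sub] by (simp add: R_def)
  have D'R: "D' = add_mset (enat a, d) (add_mset (enat b, c) R)" by (simp add: D' R_def)
  have "\<exists>E. arc_move D E \<and> arc_move\<^sup>+\<^sup>+ E D'" if ne: "xing D' + 1 \<noteq> xing D"
  proof -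
    obtain e s t where e: "e \<in># R" "e = (enat s, t)" and st: "b < s" "s < a" "d < t" "t < c"
      using g ne by blast
    have Re: "R = add_mset (enat s, t) (R - {#e#})" using e by simp
    show ?thesis unfolding DR D'R by (subst (1 2) Re) (rule pathA; use o st in linarith)
  qed
  then show ?thesis using g by blast
qed

lemma typeC:
  assumes w: "wfd D" and o: "b < a" "c < b" "d < c"
    and sub: "{#(enat a, c), (enat b, d)#} \<subseteq># D"
    and D': "D' = D - {#(enat a, c), (enat b, d)#} + {#(enat a, b), (enat c, d)#}"
  shows "xing D' < xing D \<and> (xing D' + 1 \<noteq> xing D \<longrightarrow> (\<exists>E. arc_move D E \<and> arc_move\<^sup>+\<^sup>+ E D'))"
proof -
  define R where "R = D - {#(enat a, c), (enat b, d)#}"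
  have g: "xing D' < xing D \<and> (xing D' + 1 \<noteq> xing D \<longrightarrow> (\<exists>e. e \<in># R \<and>
      ((\<exists>s t. e = (enat s, t) \<and> a < s \<and> c < t \<and> t < b) \<or>
      (\<exists>t. e = (\<infinity>, t) \<and> c < t \<and> t < b) \<or>
      (\<exists>s t. e = (enat s, t) \<and> c < s \<and> s < b \<and> t < d))))"
    unfolding D' R_def
    apply (rule generic[OF w sub])
    subgoal using o by (simp add: crosses_def)
    subgoal using o by (simp add: crosses_def)
    subgoal by (rule eC[OF o(3) o(2) o(1)]; assumption)
    done
  have DR: "D = add_mset (enat a, c) (add_mset (enat b, d) R)"
    using subset_mset.diff_add[OF sub] by (simp add: R_def)
  have D'R: "D' = add_mset (enat a, b) (add_mset (enat c, d) R)" by (simp add: D' R_def)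
  have "\<exists>E. arc_move D E \<and> arc_move\<^sup>+\<^sup>+ E D'" if ne: "xing D' + 1 \<noteq> xing D"
  proof -
    obtain e where e: "e \<in># R" and q: "(\<exists>s t. e = (enat s, t) \<and> a < s \<and> c < t \<and> t < b) \<or>
      (\<exists>t. e = (\<infinity>, t) \<and> c < t \<and> t < b) \<or>
      (\<exists>s t. e = (enat s, t) \<and> c < s \<and> s < b \<and> t < d)"
      using g ne by blast
    have Re: "R = add_mset e (R - {#e#})" using e by simp
    from q show ?thesis
    proof (elim disjE exE conjE)
      fix s t assume ee: "e = (enat s, t)" and st: "a < s" "c < t" "t < b"
      show ?thesis unfolding DR D'R by (subst (1 2) Re) (unfold ee, rule pathC1; use o st in linarith)
    next
      fix t assume ee: "e = (\<infinity>, t)" and st: "c < t" "t < b"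
      show ?thesis unfolding DR D'R by (subst (1 2) Re) (unfold ee, rule pathC2; use o st in linarith)
    next
      fix s t assume ee: "e = (enat s, t)" and st: "c < s" "s < b" "t < d"
      show ?thesis unfolding DR D'R by (subst (1 2) Re) (unfold ee, rule pathC3; use o st in linarith)
    qed
  qed
  then show ?thesis using g by blast
qed

lemma typeB:
  assumes w: "wfd D" and o: "b < a" "c < b"
    and sub: "{#(enat a, c), (\<infinity>, b)#} \<subseteq># D"
    and D': "D' = D - {#(enat a, c), (\<infinity>, b)#} + {#(enat a, b), (\<infinity>, c)#}"
  shows "xing D' < xing D \<and> (xing D' + 1 \<noteq> xing D \<longrightarrow> (\<exists>E. arc_move D E \<and> arc_move\<^sup>+\<^sup>+ E D'))"
proof -
  define R where "R = D - {#(enat a, c), (\<infinity>, b)#}"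
  have g: "xing D' < xing D \<and> (xing D' + 1 \<noteq> xing D \<longrightarrow> (\<exists>e. e \<in># R \<and>
      ((\<exists>s t. e = (enat s, t) \<and> a < s \<and> c < t \<and> t < b) \<or>
      (\<exists>t. e = (\<infinity>, t) \<and> c < t \<and> t < b))))"
    unfolding D' R_def
    apply (rule generic[OF w sub])
    subgoal using o by (simp add: crosses_def)
    subgoal using o by (simp add: crosses_def)
    subgoal by (rule eB[OF o(2) o(1)]; assumption)
    done
  have DR: "D = add_mset (enat a, c) (add_mset (\<infinity>, b) R)"
    using subset_mset.diff_add[OF sub] by (simp add: R_def)
  have D'R: "D' = add_mset (enat a, b) (add_mset (\<infinity>, c) R)" by (simp add: D' R_def)
  have "\<exists>E. arc_move D E \<and> arc_move\<^sup>+\<^sup>+ E D'" if ne: "xing D' + 1 \<noteq> xing D"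
  proof -
    obtain e where e: "e \<in># R" and q: "(\<exists>s t. e = (enat s, t) \<and> a < s \<and> c < t \<and> t < b) \<or>
      (\<exists>t. e = (\<infinity>, t) \<and> c < t \<and> t < b)"
      using g ne by blast
    have Re: "R = add_mset e (R - {#e#})" using e by simp
    from q show ?thesis
    proof (elim disjE exE conjE)
      fix s t assume ee: "e = (enat s, t)" and st: "a < s" "c < t" "t < b"
      show ?thesis unfolding DR D'R by (subst (1 2) Re) (unfold ee, rule pathB1; use o st in linarith)
    next
      fix t assume ee: "e = (\<infinity>, t)" and st: "c < t" "t < b"
      show ?thesis unfolding DR D'R by (subst (1 2) Re) (unfold ee, rule pathB2; use o st in linarith)
    qed
  qed
  then show ?thesis using g by blast
qed

lemma typeD:
  assumes w: "wfd D" and o: "b < a" "c < b"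
    and sub: "{#(enat a, c), (\<infinity>, b)#} \<subseteq># D"
    and D': "D' = D - {#(enat a, c), (\<infinity>, b)#} + {#(enat b, c), (\<infinity>, a)#}"
  shows "xing D' < xing D \<and> (xing D' + 1 \<noteq> xing D \<longrightarrow> (\<exists>E. arc_move D E \<and> arc_move\<^sup>+\<^sup>+ E D'))"
proof -
  define R where "R = D - {#(enat a, c), (\<infinity>, b)#}"
  have g: "xing D' < xing D \<and> (xing D' + 1 \<noteq> xing D \<longrightarrow> (\<exists>e. e \<in># R \<and>
      ((\<exists>s t. e = (enat s, t) \<and> b < s \<and> s < a \<and> t < c) \<or>
      (\<exists>t. e = (\<infinity>, t) \<and> b < t \<and> t < a))))"
    unfolding D' R_def
    apply (rule generic[OF w sub])
    subgoal using o by (simp add: crosses_def)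
    subgoal using o by (simp add: crosses_def)
    subgoal by (rule eD[OF o(2) o(1)]; assumption)
    done
  have DR: "D = add_mset (enat a, c) (add_mset (\<infinity>, b) R)"
    using subset_mset.diff_add[OF sub] by (simp add: R_def)
  have D'R: "D' = add_mset (enat b, c) (add_mset (\<infinity>, a) R)" by (simp add: D' R_def)
  have "\<exists>E. arc_move D E \<and> arc_move\<^sup>+\<^sup>+ E D'" if ne: "xing D' + 1 \<noteq> xing D"
  proof -
    obtain e where e: "e \<in># R" and q: "(\<exists>s t. e = (enat s, t) \<and> b < s \<and> s < a \<and> t < c) \<or>
      (\<exists>t. e = (\<infinity>, t) \<and> b < t \<and> t < a)"
      using g ne by blast
    have Re: "R = add_mset e (R - {#e#})" using e by simp
    from q show ?thesis
    proof (elim disjE exE conjE)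
      fix s t assume ee: "e = (enat s, t)" and st: "b < s" "s < a" "t < c"
      show ?thesis unfolding DR D'R by (subst (1 2) Re) (unfold ee, rule pathD2; use o st in linarith)
    next
      fix t assume ee: "e = (\<infinity>, t)" and st: "b < t" "t < a"
      show ?thesis unfolding DR D'R by (subst (1 2) Re) (unfold ee, rule pathD1; use o st in linarith)
    qed
  qed
  then show ?thesis using g by blast
qed
lemma preserve:
  assumes D: "D \<in> arc_diagrams \<alpha> \<beta> \<gamma>" and sub: "P \<subseteq># D"
    and m: "\<forall>p\<in>#P'. is_arc p \<or> is_pole p"
    and ca: "size (filter_mset is_arc P') = size (filter_mset is_arc P)"
    and cp: "size (filter_mset is_pole P') = size (filter_mset is_pole P)"
    and ci: "\<And>i. incid P' i = incid P i"
  shows "D - P + P' \<in> arc_diagrams \<alpha> \<beta> \<gamma>"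
proof -
  define R where "R = D - P"
  have DR: "D = R + P" using subset_mset.diff_add[OF sub] by (simp add: R_def)
  have E: "D - P + P' = R + P'" by (simp add: R_def)
  have mR: "\<forall>p\<in>#R. is_arc p \<or> is_pole p" using D DR by (auto simp: arc_diagrams_def)
  have "size (filter_mset is_arc (R + P')) = size (filter_mset is_arc D)"
    using ca DR by simp
  moreover have "size (filter_mset is_pole (R + P')) = size (filter_mset is_pole D)"
    using cp DR by simp
  moreover have "incid (R + P') i = incid D i" for i
    using ci DR by simp
  ultimately show ?thesis using D mR m unfolding E by (auto simp: arc_diagrams_def)
qed

lemma move_preserve:
  assumes D: "D \<in> arc_diagrams \<alpha> \<beta> \<gamma>" and mv: "arc_move D D'"
  shows "D' \<in> arc_diagrams \<alpha> \<beta> \<gamma>"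
proof -
  have mem: "\<forall>p\<in>#D. is_arc p \<or> is_pole p" using D by (simp add: arc_diagrams_def)
  from mv show ?thesis unfolding arc_move_def
  proof (elim disjE exE conjE)
    fix a b c d :: nat
    assume o: "a > b" "b > c" "c > d" and sub: "{#(enat a, c), (enat b, d)#} \<subseteq># D"
      and D': "D' = D - {#(enat a, c), (enat b, d)#} + {#(enat a, d), (enat b, c)#}"
    have "(enat b, d) \<in># D" by (rule mset_subset_eqD[OF sub]) simp
    then have d1: "1 \<le> d" using mem by (auto simp: is_arc_def is_pole_def)
    show ?thesis unfolding D' by (rule preserve[OF D sub]) (use o d1 in \<open>auto simp: is_arc_def is_pole_def incid_def\<close>)
  next
    fix a b c d :: nat
    assume o: "a > b" "b > c" "c > d" and sub: "{#(enat a, c), (enat b, d)#} \<subseteq># D"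
      and D': "D' = D - {#(enat a, c), (enat b, d)#} + {#(enat a, b), (enat c, d)#}"
    have "(enat b, d) \<in># D" by (rule mset_subset_eqD[OF sub]) simp
    then have d1: "1 \<le> d" using mem by (auto simp: is_arc_def is_pole_def)
    show ?thesis unfolding D' by (rule preserve[OF D sub]) (use o d1 in \<open>auto simp: is_arc_def is_pole_def incid_def\<close>)
  next
    fix a b c :: nat
    assume o: "a > b" "b > c" and sub: "{#(enat a, c), (\<infinity>, b)#} \<subseteq># D"
      and D': "D' = D - {#(enat a, c), (\<infinity>, b)#} + {#(enat a, b), (\<infinity>, c)#}"
    have "(enat a, c) \<in># D" by (rule mset_subset_eqD[OF sub]) simp
    then have d1: "1 \<le> c" using mem by (auto simp: is_arc_def is_pole_def)
    show ?thesis unfolding D' by (rule preserve[OF D sub]) (use o d1 in \<open>auto simp: is_arc_def is_pole_def incid_def\<close>)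
  next
    fix a b c :: nat
    assume o: "a > b" "b > c" and sub: "{#(enat a, c), (\<infinity>, b)#} \<subseteq># D"
      and D': "D' = D - {#(enat a, c), (\<infinity>, b)#} + {#(enat b, c), (\<infinity>, a)#}"
    have "(enat a, c) \<in># D" by (rule mset_subset_eqD[OF sub]) simp
    then have d1: "1 \<le> c" using mem by (auto simp: is_arc_def is_pole_def)
    show ?thesis unfolding D' by (rule preserve[OF D sub]) (use o d1 in \<open>auto simp: is_arc_def is_pole_def incid_def\<close>)
  qed
qed

lemma move_main:
  assumes w: "wfd D" and mv: "arc_move D D'"
  shows "xing D' < xing D \<and> (xing D' + 1 \<noteq> xing D \<longrightarrow> (\<exists>E. arc_move D E \<and> arc_move\<^sup>+\<^sup>+ E D'))"
  using mv[unfolded arc_move_def]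
proof (elim disjE exE conjE)
  fix a b c d :: nat
  assume o: "a > b" "b > c" "c > d" and s: "{#(enat a, c), (enat b, d)#} \<subseteq># D"
    and d: "D' = D - {#(enat a, c), (enat b, d)#} + {#(enat a, d), (enat b, c)#}"
  show ?thesis by (rule typeA[OF w o s d])
next
  fix a b c d :: nat
  assume o: "a > b" "b > c" "c > d" and s: "{#(enat a, c), (enat b, d)#} \<subseteq># D"
    and d: "D' = D - {#(enat a, c), (enat b, d)#} + {#(enat a, b), (enat c, d)#}"
  show ?thesis by (rule typeC[OF w o s d])
next
  fix a b c :: nat
  assume o: "a > b" "b > c" and s: "{#(enat a, c), (\<infinity>, b)#} \<subseteq># D"
    and d: "D' = D - {#(enat a, c), (\<infinity>, b)#} + {#(enat a, b), (\<infinity>, c)#}"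
  show ?thesis by (rule typeB[OF w o s d])
next
  fix a b c :: nat
  assume o: "a > b" "b > c" and s: "{#(enat a, c), (\<infinity>, b)#} \<subseteq># D"
    and d: "D' = D - {#(enat a, c), (\<infinity>, b)#} + {#(enat b, c), (\<infinity>, a)#}"
  show ?thesis by (rule typeD[OF w o s d])
qed

lemma chain:
  assumes H: "\<forall>i\<ge>1. conj \<beta> i \<le> conj \<gamma> i + 1"
  shows "arc_move\<^sup>+\<^sup>+ D E \<Longrightarrow> D \<in> arc_diagrams \<alpha> \<beta> \<gamma> \<Longrightarrow> E \<in> arc_diagrams \<alpha> \<beta> \<gamma> \<and> xing E < xing D"
proof (induction rule: tranclp_induct)
  case (base y)
  then show ?case using move_preserve move_main AD_wfd[OF H] by blast
next
  case (step y z)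
  then have "y \<in> arc_diagrams \<alpha> \<beta> \<gamma>" "xing y < xing D" by auto
  then show ?case using step move_preserve move_main AD_wfd[OF H] by (meson order.strict_trans)
qed
theorem mainTheorem2:
  assumes "is_partition \<alpha>" and "is_partition \<beta>" and "is_partition \<gamma>"
    and "\<forall>x\<in>set \<alpha>. x \<le> 2"
    and "\<forall>i\<ge>1. conj \<beta> i \<le> conj \<gamma> i + 1"
    and "\<Delta> \<in> arc_diagrams \<alpha> \<beta> \<gamma>" and "\<Delta>' \<in> arc_diagrams \<alpha> \<beta> \<gamma>"
  shows "(arc_le \<Delta>' \<Delta> \<and> \<Delta>' \<noteq> \<Delta> \<and>
          \<not> (\<exists>\<Delta>''\<in>arc_diagrams \<alpha> \<beta> \<gamma>. arc_less \<Delta>' \<Delta>'' \<and> arc_less \<Delta>'' \<Delta>))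
     \<longleftrightarrow> (arc_move \<Delta> \<Delta>' \<and> int (xing \<Delta>') = int (xing \<Delta>) - 1)"
proof
  note H = assms(5)
  note D = assms(6)
  have wD: "wfd \<Delta>" using AD_wfd[OF H D] .
  have lessx: "xing F < xing G" if "G \<in> arc_diagrams \<alpha> \<beta> \<gamma>" "arc_less F G" for F G
  proof -
    have "arc_move\<^sup>*\<^sup>* G F" "F \<noteq> G" using that by (auto simp: arc_less_def arc_le_def)
    then have "arc_move\<^sup>+\<^sup>+ G F" by (metis rtranclpD)
    then show ?thesis using chain[OF H] that(1) by blast
  qed
  {
    assume L: "arc_le \<Delta>' \<Delta> \<and> \<Delta>' \<noteq> \<Delta> \<and>
          \<not> (\<exists>\<Delta>''\<in>arc_diagrams \<alpha> \<beta> \<gamma>. arc_less \<Delta>' \<Delta>'' \<and> arc_less \<Delta>'' \<Delta>)"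
    then have st: "arc_move\<^sup>*\<^sup>* \<Delta> \<Delta>'" and ne: "\<Delta>' \<noteq> \<Delta>" by (auto simp: arc_le_def)
    then obtain E where m1: "arc_move \<Delta> E" and r: "arc_move\<^sup>*\<^sup>* E \<Delta>'"
      by (metis converse_rtranclpE)
    have EAD: "E \<in> arc_diagrams \<alpha> \<beta> \<gamma>" using move_preserve[OF D m1] .
    have xE: "xing E < xing \<Delta>" using move_main[OF wD m1] by blast
    have mv: "arc_move \<Delta> \<Delta>'"
    proof (rule ccontr)
      assume "\<not> arc_move \<Delta> \<Delta>'"
      then have "E \<noteq> \<Delta>'" using m1 by auto
      then have "arc_less \<Delta>' E" using r by (simp add: arc_less_def arc_le_def)
      moreover have "arc_less E \<Delta>" using m1 xE by (auto simp: arc_less_def arc_le_def)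
      ultimately show False using L EAD by auto
    qed
    have mm: "xing \<Delta>' < xing \<Delta> \<and> (xing \<Delta>' + 1 \<noteq> xing \<Delta> \<longrightarrow> (\<exists>E. arc_move \<Delta> E \<and> arc_move\<^sup>+\<^sup>+ E \<Delta>'))"
      using move_main[OF wD mv] .
    have "xing \<Delta>' + 1 = xing \<Delta>"
    proof (rule ccontr)
      assume "xing \<Delta>' + 1 \<noteq> xing \<Delta>"
      then obtain E2 where m2: "arc_move \<Delta> E2" and t2: "arc_move\<^sup>+\<^sup>+ E2 \<Delta>'" using mm by blast
      have E2AD: "E2 \<in> arc_diagrams \<alpha> \<beta> \<gamma>" using move_preserve[OF D m2] .
      have x2: "xing E2 < xing \<Delta>" using move_main[OF wD m2] by blast
      have x3: "xing \<Delta>' < xing E2" using chain[OF H t2 E2AD] by blast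
      have "arc_less \<Delta>' E2" using t2 x3 by (auto simp: arc_less_def arc_le_def dest: tranclp_into_rtranclp)
      moreover have "arc_less E2 \<Delta>" using m2 x2 by (auto simp: arc_less_def arc_le_def)
      ultimately show False using L E2AD by auto
    qed
    then show "arc_move \<Delta> \<Delta>' \<and> int (xing \<Delta>') = int (xing \<Delta>) - 1" using mv by simp
  }
  {
    assume R: "arc_move \<Delta> \<Delta>' \<and> int (xing \<Delta>') = int (xing \<Delta>) - 1"
    then have mv: "arc_move \<Delta> \<Delta>'" and x1: "xing \<Delta>' + 1 = xing \<Delta>" by auto
    have le: "arc_le \<Delta>' \<Delta>" using mv by (simp add: arc_le_def)
    have ne: "\<Delta>' \<noteq> \<Delta>" using x1 by auto
    have "\<not> (\<exists>\<Delta>''\<in>arc_diagrams \<alpha> \<beta> \<gamma>. arc_less \<Delta>' \<Delta>'' \<and> arc_less \<Delta>'' \<Delta>)"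
    proof
      assume "\<exists>\<Delta>''\<in>arc_diagrams \<alpha> \<beta> \<gamma>. arc_less \<Delta>' \<Delta>'' \<and> arc_less \<Delta>'' \<Delta>"
      then obtain F where F: "F \<in> arc_diagrams \<alpha> \<beta> \<gamma>" "arc_less \<Delta>' F" "arc_less F \<Delta>" by blast
      have "xing \<Delta>' < xing F" using lessx[OF F(1) F(2)] .
      moreover have "xing F < xing \<Delta>" using lessx[OF D F(3)] .
      ultimately show False using x1 by linarith
    qed
    then show "arc_le \<Delta>' \<Delta> \<and> \<Delta>' \<noteq> \<Delta> \<and>
          \<not> (\<exists>\<Delta>''\<in>arc_diagrams \<alpha> \<beta> \<gamma>. arc_less \<Delta>' \<Delta>'' \<and> arc_less \<Delta>'' \<Delta>)" using le ne by blast
  }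
qed

end
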